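(* Let $\mathbf{R}^{\mathrm{o}}$ be a finite set of obligations, $\mathbf{R}=(\emptyset,\mathbf{R}^{\mathrm{o}})$, fix a set $\Gamma$ of alethic formulas relative to which the overriding relation $\triangleright$ is computed, and let $M$ be a replete $\mathbf{R}$-ordered model. For every Boolean formula $a$ and world $w$ of $M$: if $w\in\max_{\succeq_I}(\Vert a\Vert)$, then $w\models a$ and $w\models\bigvee_{H\in\mathit{maxf}(\mathbf{R}^{\mathrm{o}}_{\triangleright},a,\{a\})}\bigl(\bigwedge\mathrm{m}(H)\bigr)$, with $out_4^{+}$ as the underlying I/O operation.
   Context: Boolean formulas over propositional letters; $\models_{\mathrm{PL}}$ classical entailment, $\models_{\mathrm{S5}}$ S5 entailment. An obligation is $\bigcirc(B/A)$ ($A,B$ Boolean) with body $b=A$, head $h=B$. Overriding: $r_j\triangleright r_i$ iff (i) $\{h(r_i),h(r_j)\}\cup\Gamma\models_{\mathrm{S5}}\bot$; (ii) $b(r_j)\models_{\mathrm{PL}}b(r_i)$ and $b(r_i)\not\models_{\mathrm{PL}}b(r_j)$; (iii) $\{h(r_i),b(r_j)\}\not\models_{\mathrm{PL}}\bot$. An $\mathbf{R}$-ordered model (no normality conditionals) is $(W,\succeq_N,\succeq_I,v)$ with $W\neq\emptyset$, valuation $v$, $\succeq_N=W\times W$, and $w_1\succeq_I w_2$ iff $V(w_1)\subseteq V(w_2)$, where $V(w)=\{r_i\in\mathbf{R}^{\mathrm{o}}:w\models b(r_i)\wedge\neg h(r_i)$ and $w\not\models b(r_j)$ for all $r_j\in\mathbf{R}^{\mathrm{o}}$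 with $r_j\triangleright r_i\}$. $\max_{\succeq_I}(X)=\{w\in X:\forall u\in X(u\succeq_I w\Rightarrow w\succeq_I u)\}$, $\Vert a\Vert$ the set of worlds where $a$ holds. Replete: every PL-consistent Boolean formula holds at some world. I/O: for a set $H$ of pairs of Boolean formulas, $\mathrm{m}(H)=\{a\rightarrow x:(a,x)\in H\}$ ($\bigwedge\mathrm{m}(\emptyset)=\top$), $out_4^{+}(H,a)=\{x:\{a\}\cup\mathrm{m}(H)\models_{\mathrm{PL}}x\}$; $\mathit{maxf}(N,a,C)$ is the set of $\subseteq$-maximal $H\subseteq N$ with $out_4^{+}(H,a)\cup C$ PL-consistent. Translation: for $r_i=\bigcirc(x/a)$, $D(r_i)=\{r_j\in\mathbf{R}^{\mathrm{o}}:r_j\triangleright r_i\}$, $r_i^{\triangleright}=(a\wedge\bigwedge_{r_j\in D(r_i)}\neg b(r_j),x)$ if $D(r_i)\neq\emptyset$, else $(a,x)$; $\mathbf{R}^{\mathrm{o}}_{\triangleright}=\{r^{\triangleright}:r\in\mathbf{R}^{\mathrm{o}}\}$. *)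

theory Defs
  imports Main
begin

datatype 'p bform =
    BAtom 'p | BTop | BBot | BNeg "'p bform" | BAnd "'p bform" "'p bform"
  | BOr "'p bform" "'p bform" | BImp "'p bform" "'p bform"

primrec beval :: "('p \<Rightarrow> bool) \<Rightarrow> 'p bform \<Rightarrow> bool" where
  "beval v (BAtom p) = v p"
| "beval v BTop = True"
| "beval v BBot = False"
| "beval v (BNeg a) = (\<not> beval v a)"
| "beval v (BAnd a b) = (beval v a \<and> beval v b)"
| "beval v (BOr a b) = (beval v a \<or> beval v b)"
| "beval v (BImp a b) = (beval v a \<longrightarrow> beval v b)"

definition pl_entails :: "'p bform set \<Rightarrow> 'p bform \<Rightarrow> bool" where
  "pl_entails S x \<longleftrightarrow> (\<forall>v. (\<forall>s\<in>S. beval v s) \<longrightarrow> beval v x)"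

definition pl_consistent :: "'p bform set \<Rightarrow> bool" where
  "pl_consistent S \<longleftrightarrow> \<not> pl_entails S BBot"

fun BigAnd :: "'p bform list \<Rightarrow> 'p bform" where
  "BigAnd [] = BTop"
| "BigAnd [a] = a"
| "BigAnd (a # as) = BAnd a (BigAnd as)"

datatype 'p aform =
    AAtom 'p | ATop | ABot | ANeg "'p aform" | AAnd "'p aform" "'p aform"
  | AOr "'p aform" "'p aform" | AImp "'p aform" "'p aform" | ABox "'p aform"

primrec emb :: "'p bform \<Rightarrow> 'p aform" where
  "emb (BAtom p) = AAtom p"
| "emb BTop = ATop"
| "emb BBot = ABot"
| "emb (BNeg a) = ANeg (emb a)"
| "emb (BAnd a b) = AAnd (emb a) (emb b)"
| "emb (BOr a b) = AOr (emb a) (emb b)"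
| "emb (BImp a b) = AImp (emb a) (emb b)"

text \<open>S5 semantics: a model is a nonempty set of worlds with universal accessibility;
  worlds are identified with their valuations.\<close>
primrec s5eval :: "('p \<Rightarrow> bool) set \<Rightarrow> ('p \<Rightarrow> bool) \<Rightarrow> 'p aform \<Rightarrow> bool" where
  "s5eval W u (AAtom p) = u p"
| "s5eval W u ATop = True"
| "s5eval W u ABot = False"
| "s5eval W u (ANeg a) = (\<not> s5eval W u a)"
| "s5eval W u (AAnd a b) = (s5eval W u a \<and> s5eval W u b)"
| "s5eval W u (AOr a b) = (s5eval W u a \<or> s5eval W u b)"
| "s5eval W u (AImp a b) = (s5eval W u a \<longrightarrow> s5eval W u b)"
| "s5eval W u (ABox a) = (\<forall>u'\<in>W. s5eval W u' a)"

definition s5_entails :: "'p aform set \<Rightarrow> 'p aform \<Rightarrow> bool" where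
  "s5_entails S x \<longleftrightarrow>
     (\<forall>W u. u \<in> W \<longrightarrow> (\<forall>s\<in>S. s5eval W u s) \<longrightarrow> s5eval W u x)"

text \<open>An obligation \<open>\<bigcirc>(B/A)\<close> is represented as the pair \<open>(A, B)\<close>: body first, head second.\<close>
type_synonym 'p oblig = "'p bform \<times> 'p bform"

abbreviation body :: "'p oblig \<Rightarrow> 'p bform" where "body r \<equiv> fst r"
abbreviation head :: "'p oblig \<Rightarrow> 'p bform" where "head r \<equiv> snd r"

text \<open>\<open>overrides \<Gamma> rj ri\<close> means \<open>rj \<triangleright> ri\<close>.\<close>
definition overrides :: "'p aform set \<Rightarrow> 'p oblig \<Rightarrow> 'p oblig \<Rightarrow> bool" where
  "overrides \<Gamma> rj ri \<longleftrightarrow>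
     s5_entails ({emb (head ri), emb (head rj)} \<union> \<Gamma>) ABot
   \<and> pl_entails {body rj} (body ri) \<and> \<not> pl_entails {body ri} (body rj)
   \<and> \<not> pl_entails {head ri, body rj} BBot"

text \<open>A model is given by its set of worlds \<open>W\<close> and valuation \<open>v\<close>; \<open>\<succeq>_N = W \<times> W\<close> and
  \<open>\<succeq>_I\<close> is determined by \<open>Vset\<close>.\<close>
definition sat :: "('w \<Rightarrow> 'p \<Rightarrow> bool) \<Rightarrow> 'w \<Rightarrow> 'p bform \<Rightarrow> bool" where
  "sat v w a \<longleftrightarrow> beval (v w) a"

definition Vset :: "'p aform set \<Rightarrow> 'p oblig set \<Rightarrow> ('w \<Rightarrow> 'p \<Rightarrow> bool) \<Rightarrow> 'w \<Rightarrow> 'p oblig set" where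
  "Vset \<Gamma> Ro v w = {ri \<in> Ro. sat v w (body ri) \<and> \<not> sat v w (head ri)
       \<and> (\<forall>rj\<in>Ro. overrides \<Gamma> rj ri \<longrightarrow> \<not> sat v w (body rj))}"

definition geI :: "'p aform set \<Rightarrow> 'p oblig set \<Rightarrow> ('w \<Rightarrow> 'p \<Rightarrow> bool) \<Rightarrow> 'w \<Rightarrow> 'w \<Rightarrow> bool" where
  "geI \<Gamma> Ro v w1 w2 \<longleftrightarrow> Vset \<Gamma> Ro v w1 \<subseteq> Vset \<Gamma> Ro v w2"

definition maxI :: "'p aform set \<Rightarrow> 'p oblig set \<Rightarrow> ('w \<Rightarrow> 'p \<Rightarrow> bool) \<Rightarrow> 'w set \<Rightarrow> 'w set" where
  "maxI \<Gamma> Ro v X = {w \<in> X. \<forall>u\<in>X. geI \<Gamma> Ro v u w \<longrightarrow> geI \<Gamma> Ro v w u}"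

definition truthset :: "'w set \<Rightarrow> ('w \<Rightarrow> 'p \<Rightarrow> bool) \<Rightarrow> 'p bform \<Rightarrow> 'w set" where
  "truthset W v a = {w \<in> W. sat v w a}"

definition replete :: "'w set \<Rightarrow> ('w \<Rightarrow> 'p \<Rightarrow> bool) \<Rightarrow> bool" where
  "replete W v \<longleftrightarrow> (\<forall>a. pl_consistent {a} \<longrightarrow> (\<exists>w\<in>W. sat v w a))"

text \<open>\<open>(W, W \<times> W, \<succeq>_I, v)\<close> is an R-ordered model for \<open>R = (\<emptyset>, Ro)\<close>; the only
  requirement beyond the definitions above is \<open>W \<noteq> \<emptyset>\<close>.\<close>
definition R_ordered_model :: "'w set \<Rightarrow> ('w \<Rightarrow> 'p \<Rightarrow> bool) \<Rightarrow> bool" where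
  "R_ordered_model W v \<longleftrightarrow> W \<noteq> {}"

definition mat :: "'p oblig set \<Rightarrow> 'p bform set" where
  "mat H = {BImp a x | a x. (a, x) \<in> H}"

definition out4plus :: "'p oblig set \<Rightarrow> 'p bform \<Rightarrow> 'p bform set" where
  "out4plus H a = {x. pl_entails ({a} \<union> mat H) x}"

definition maxf :: "'p oblig set \<Rightarrow> 'p bform \<Rightarrow> 'p bform set \<Rightarrow> 'p oblig set set" where
  "maxf N a C = {H. H \<subseteq> N \<and> pl_consistent (out4plus H a \<union> C)
      \<and> (\<forall>H'. H \<subset> H' \<and> H' \<subseteq> N \<longrightarrow> \<not> pl_consistent (out4plus H' a \<union> C))}"

definition Dset :: "'p aform set \<Rightarrow> 'p oblig set \<Rightarrow> 'p oblig \<Rightarrow> 'p oblig set" where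
  "Dset \<Gamma> Ro ri = {rj \<in> Ro. overrides \<Gamma> rj ri}"

text \<open>\<open>\<And>_{rj \<in> D} \<not> b(rj)\<close>, using some enumeration of the finite set \<open>D\<close>.\<close>
definition negbodies :: "'p oblig set \<Rightarrow> 'p bform" where
  "negbodies D = BigAnd (map (\<lambda>rj. BNeg (body rj)) (SOME xs. set xs = D \<and> distinct xs))"

definition transl :: "'p aform set \<Rightarrow> 'p oblig set \<Rightarrow> 'p oblig \<Rightarrow> 'p oblig" where
  "transl \<Gamma> Ro r = (if Dset \<Gamma> Ro r = {} then r
                    else (BAnd (body r) (negbodies (Dset \<Gamma> Ro r)), head r))"

definition Rtransl :: "'p aform set \<Rightarrow> 'p oblig set \<Rightarrow> 'p oblig set" where
  "Rtransl \<Gamma> Ro = transl \<Gamma> Ro ` Ro"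

end

theory Submission
  imports Defs
begin

lemma beval_BigAnd: "beval v (BigAnd l) = (\<forall>x\<in>set l. beval v x)"
  by (induction l rule: BigAnd.induct) auto

lemma beval_negbodies:
  assumes "finite D"
  shows "beval v (negbodies D) = (\<forall>rj\<in>D. \<not> beval v (body rj))"
proof -
  have "\<exists>xs. set xs = D \<and> distinct xs" using finite_distinct_list[OF assms] .
  then have "set (SOME xs. set xs = D \<and> distinct xs) = D" by (metis (mono_tags, lifting) someI_ex)
  then show ?thesis unfolding negbodies_def beval_BigAnd by auto
qed

lemma transl_sat:
  assumes "finite Ro" "r \<in> Ro"
  shows "sat v w (BImp (fst (transl \<Gamma> Ro r)) (snd (transl \<Gamma> Ro r))) \<longleftrightarrow> r \<notin> Vset \<Gamma> Ro v w"
proof -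
  have fin: "finite (Dset \<Gamma> Ro r)" using assms(1) unfolding Dset_def by auto
  show ?thesis
    using assms(2) beval_negbodies[OF fin]
    unfolding transl_def Vset_def sat_def Dset_def
    by (auto split: if_splits)
qed

theorem theorem2:
  fixes Ro :: "'p oblig set" and \<Gamma> :: "'p aform set"
    and W :: "'w set" and v :: "'w \<Rightarrow> 'p \<Rightarrow> bool"
    and a :: "'p bform" and w :: 'w
  assumes "finite Ro"
    and "R_ordered_model W v"
    and "replete W v"
    and "w \<in> maxI \<Gamma> Ro v (truthset W v a)"
  shows "sat v w a \<and>
         (\<exists>H \<in> maxf (Rtransl \<Gamma> Ro) a {a}. \<forall>\<phi> \<in> mat H. sat v w \<phi>)"
proof -
  let ?S = "\<lambda>u. {t \<in> Rtransl \<Gamma> Ro. sat v u (BImp (fst t) (snd t))}"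
  have wT: "w \<in> W" "sat v w a" using assms(4) unfolding maxI_def truthset_def by auto
  have wmax: "\<And>u. u \<in> W \<Longrightarrow> sat v u a \<Longrightarrow> geI \<Gamma> Ro v u w \<Longrightarrow> geI \<Gamma> Ro v w u"
    using assms(4) unfolding maxI_def truthset_def by auto
  have matS: "\<forall>\<phi> \<in> mat (?S u). sat v u \<phi>" for u
    unfolding mat_def by auto
  have cons: "pl_consistent (out4plus H a \<union> {a}) \<longleftrightarrow> (\<exists>val. beval val a \<and> (\<forall>\<phi>\<in>mat H. beval val \<phi>))" for H
  proof
    assume "pl_consistent (out4plus H a \<union> {a})"
    then obtain val where val: "\<forall>s\<in>out4plus H a \<union> {a}. beval val s"
      unfolding pl_consistent_def pl_entails_def by auto
    have "mat H \<subseteq> out4plus H a" unfolding out4plus_def pl_entails_def by auto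
    then show "\<exists>val. beval val a \<and> (\<forall>\<phi>\<in>mat H. beval val \<phi>)" using val by blast
  next
    assume "\<exists>val. beval val a \<and> (\<forall>\<phi>\<in>mat H. beval val \<phi>)"
    then obtain val where "beval val a" "\<forall>\<phi>\<in>mat H. beval val \<phi>" by auto
    then show "pl_consistent (out4plus H a \<union> {a})"
      unfolding pl_consistent_def pl_entails_def out4plus_def
      by (intro notI) (drule spec[of _ val], auto)
  qed
  have finR: "finite (Rtransl \<Gamma> Ro)" using assms(1) unfolding Rtransl_def by auto
  have "?S w \<in> maxf (Rtransl \<Gamma> Ro) a {a}"
    unfolding maxf_def
  proof (intro CollectI conjI allI impI)
    show "?S w \<subseteq> Rtransl \<Gamma> Ro" by auto
    show "pl_consistent (out4plus (?S w) a \<union> {a})"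
      unfolding cons using wT matS[of w] unfolding sat_def by blast
  next
    fix H' assume H': "?S w \<subset> H' \<and> H' \<subseteq> Rtransl \<Gamma> Ro"
    show "\<not> pl_consistent (out4plus H' a \<union> {a})"
    proof
      assume "pl_consistent (out4plus H' a \<union> {a})"
      then obtain val where val: "beval val a" "\<forall>\<phi>\<in>mat H'. beval val \<phi>" unfolding cons by auto
      have "finite H'" using H' finR finite_subset by blast
      then obtain xs where xs: "set xs = H'" using finite_list by blast
      let ?f = "BigAnd (a # map (\<lambda>t. BImp (fst t) (snd t)) xs)"
      have matH': "mat H' = (\<lambda>t. BImp (fst t) (snd t)) ` H'" unfolding mat_def by force
      have "beval val ?f" using val xs matH' unfolding beval_BigAnd by auto
      then have "pl_consistent {?f}" unfolding pl_consistent_def pl_entails_def by auto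
      then obtain u where u: "u \<in> W" "sat v u ?f" using assms(3) unfolding replete_def by blast
      have ua: "sat v u a" and uH: "\<And>t. t \<in> H' \<Longrightarrow> sat v u (BImp (fst t) (snd t))"
        using u(2) xs unfolding sat_def beval_BigAnd by auto
      have sub: "H' \<subseteq> ?S u" using H' uH by auto
      have ge1: "geI \<Gamma> Ro v u w"
        unfolding geI_def
      proof
        fix r assume r: "r \<in> Vset \<Gamma> Ro v u"
        then have rR: "r \<in> Ro" unfolding Vset_def by auto
        have "transl \<Gamma> Ro r \<in> Rtransl \<Gamma> Ro" using rR unfolding Rtransl_def by auto
        moreover have "\<not> sat v u (BImp (fst (transl \<Gamma> Ro r)) (snd (transl \<Gamma> Ro r)))"
          using transl_sat[OF assms(1) rR, of v u \<Gamma>] r by auto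
        ultimately have "transl \<Gamma> Ro r \<notin> ?S w" using sub H' by blast
        then show "r \<in> Vset \<Gamma> Ro v w" using transl_sat[OF assms(1) rR, of v w]
          \<open>transl \<Gamma> Ro r \<in> Rtransl \<Gamma> Ro\<close> by auto
      qed
      obtain t where t: "t \<in> H'" "t \<notin> ?S w" using H' by blast
      have "t \<in> Rtransl \<Gamma> Ro" using t(1) H' by blast
      then obtain r where rR: "r \<in> Ro" and tr: "t = transl \<Gamma> Ro r" unfolding Rtransl_def by blast
      have "r \<in> Vset \<Gamma> Ro v w" using t H' transl_sat[OF assms(1) rR, of v w] tr by auto
      moreover have "r \<notin> Vset \<Gamma> Ro v u" using uH[OF t(1)] transl_sat[OF assms(1) rR, of v u] tr by auto
      ultimately have "\<not> geI \<Gamma> Ro v w u" unfolding geI_def by auto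
      then show False using wmax[OF u(1) ua ge1] by simp
    qed
  qed
  then show ?thesis using wT matS[of w] by blast
qed

end
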